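(* Let $(M,\rho)$ be a metric space, $f:[a,b]\to M$ arbitrary, and let $E\subset[a,b]$ be a Lebesgue measurable set such that $md(f,x)$ exists and is finite for every $x\in E$ (and $x\mapsto md(f,x)$ is measurable on $E$). Then $$\mathcal H^1(f(E))\le\int_E md(f,x)\,dx.$$
   Context: For $f:[a,b]\to(M,\rho)$ and $x\in[a,b]$, $md(f,x)=\lim_{t\to0,\ x+t\in[a,b]}\rho(f(x+t),f(x))/|t|$ when the limit exists. $\mathcal H^1$ is the one-dimensional Hausdorff measure on $M$. The integral of the nonnegative function may be $+\infty$. *)

theory Defs
  imports "HOL-Analysis.Analysis"
begin

definition md_quot :: "(real \<Rightarrow> 'a::metric_space) \<Rightarrow> real \<Rightarrow> real \<Rightarrow> real" where
  "md_quot f x t = dist (f (x + t)) (f x) / \<bar>t\<bar>"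

definition md_exists :: "(real \<Rightarrow> 'a::metric_space) \<Rightarrow> real \<Rightarrow> real \<Rightarrow> real \<Rightarrow> bool" where
  "md_exists f a b x \<longleftrightarrow> (\<exists>L. (md_quot f x \<longlongrightarrow> L) (at 0 within {t. x + t \<in> {a..b}}))"

definition md :: "(real \<Rightarrow> 'a::metric_space) \<Rightarrow> real \<Rightarrow> real \<Rightarrow> real \<Rightarrow> real" where
  "md f a b x = Lim (at 0 within {t. x + t \<in> {a..b}}) (md_quot f x)"

definition hausdorff1_pre :: "real \<Rightarrow> 'a::metric_space set \<Rightarrow> ennreal" where
  "hausdorff1_pre \<delta> A =
     (INF C \<in> {C :: nat \<Rightarrow> 'a set. A \<subseteq> (\<Union>n. C n) \<and> (\<forall>n. bounded (C n) \<and> diameter (C n) \<le> \<delta>)}.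
        (\<Sum>n. ennreal (diameter (C n))))"

definition hausdorff1 :: "'a::metric_space set \<Rightarrow> ennreal" where
  "hausdorff1 A = (SUP \<delta> \<in> {0<..}. hausdorff1_pre \<delta> A)"

end

theory Submission
  imports Defs
begin

lemma diam_bound:
  fixes S :: "'a::metric_space set"
  assumes "\<And>p. p \<in> S \<Longrightarrow> dist p c \<le> R" "0 \<le> R"
  shows "bounded S" "diameter S \<le> 2 * R"
proof -
  show "bounded S" unfolding bounded_def using assms(1) by (metis dist_commute)
  show "diameter S \<le> 2 * R"
  proof (cases "S = {}")
    case True then show ?thesis using assms by simp
  next
    case False
    have "dist x y \<le> 2 * R" if "x \<in> S" "y \<in> S" for x y
      using dist_triangle2[of x y c] assms(1)[OF that(1)] assms(1)[OF that(2)] by linarith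
    then show ?thesis unfolding diameter_def using False
      by (auto intro!: cSUP_least)
  qed
qed

lemma pre_mono: "X \<subseteq> Y \<Longrightarrow> hausdorff1_pre d X \<le> hausdorff1_pre d Y"
  unfolding hausdorff1_pre_def by (rule INF_mono) auto

lemma pre_le_cover:
  assumes "X \<subseteq> (\<Union>n. C n)" "\<And>n. bounded (C n)" "\<And>n. diameter (C n) \<le> d"
  shows "hausdorff1_pre d X \<le> (\<Sum>n. ennreal (diameter (C n)))"
  unfolding hausdorff1_pre_def by (rule INF_lower) (use assms in auto)

lemma pre_countable_subadd:
  fixes X :: "nat \<Rightarrow> 'a::metric_space set"
  shows "hausdorff1_pre d (\<Union>j. X j) \<le> (\<Sum>j. hausdorff1_pre d (X j))"
proof (rule ennreal_le_epsilon)
  fix e :: real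
  assume fin: "(\<Sum>j. hausdorff1_pre d (X j)) < top" and e: "0 < e"
  have ex: "\<exists>C. X j \<subseteq> (\<Union>n. C n) \<and> (\<forall>n. bounded (C n) \<and> diameter (C n) \<le> d) \<and>
     (\<Sum>n. ennreal (diameter (C n))) < hausdorff1_pre d (X j) + ennreal (e * (1/2)^Suc j)" for j
  proof -
    have lt: "hausdorff1_pre d (X j) < top"
      using ennreal_suminf_lessD[OF fin] .
    have pos: "0 < e * (1/2)^Suc j" using e by simp
    have "hausdorff1_pre d (X j) < hausdorff1_pre d (X j) + ennreal (e * (1/2)^Suc j)"
      using lt pos by simp
    then show ?thesis unfolding hausdorff1_pre_def by (subst (asm) INF_less_iff) blast
  qed
  then obtain C where C: "\<And>j. X j \<subseteq> (\<Union>n. C j n)" "\<And>j n. bounded (C j n)" "\<And>j n. diameter (C j n) \<le> d"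
    "\<And>j. (\<Sum>n. ennreal (diameter (C j n))) < hausdorff1_pre d (X j) + ennreal (e * (1/2)^Suc j)"
    by metis
  define D where "D n = C (fst (prod_decode n)) (snd (prod_decode n))" for n
  have cov: "(\<Union>j. X j) \<subseteq> (\<Union>n. D n)"
  proof
    fix x assume "x \<in> (\<Union>j. X j)"
    then obtain j k where "x \<in> C j k" using C(1) by blast
    then have "x \<in> D (prod_encode (j,k))" by (simp add: D_def)
    then show "x \<in> (\<Union>n. D n)" by blast
  qed
  have "hausdorff1_pre d (\<Union>j. X j) \<le> (\<Sum>n. ennreal (diameter (D n)))"
    by (rule pre_le_cover[OF cov]) (auto simp: D_def C)
  also have "\<dots> = (\<Sum>j. \<Sum>k. ennreal (diameter (C j k)))"
    unfolding D_def using suminf_ennreal_2dimen[of "\<lambda>j. \<Sum>k. ennreal (diameter (C j k))" "\<lambda>(j,k). ennreal (diameter (C j k))"]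
    by (simp add: case_prod_beta)
  also have "\<dots> \<le> (\<Sum>j. hausdorff1_pre d (X j) + ennreal (e * (1/2)^Suc j))"
    by (intro suminf_le summableI less_imp_le C(4))
  also have "\<dots> = (\<Sum>j. hausdorff1_pre d (X j)) + (\<Sum>j. ennreal (e * (1/2)^Suc j))"
    by (rule suminf_add[symmetric]) auto
  also have "(\<Sum>j. ennreal (e * (1/2)^Suc j)) = ennreal e"
  proof -
    have "(\<lambda>j. e * (1/2)^Suc j) sums (e * 1)"
      by (intro sums_mult power_half_series)
    then show ?thesis using e
      by (subst suminf_ennreal2) (auto simp: sums_iff)
  qed
  finally show "hausdorff1_pre d (\<Union>j. X j) \<le> (\<Sum>j. hausdorff1_pre d (X j)) + ennreal e" .
qed

lemma pre_cover:
  fixes G :: "'i \<Rightarrow> 'a::metric_space set" and H :: "'i \<Rightarrow> real set" and c :: ennreal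
  assumes I: "countable I" and T: "T \<subseteq> (\<Union>i\<in>I. G i)"
    and Gb: "\<And>i. i \<in> I \<Longrightarrow> bounded (G i)" and Gd: "\<And>i. i \<in> I \<Longrightarrow> diameter (G i) \<le> d"
    and Gc: "\<And>i. i \<in> I \<Longrightarrow> ennreal (diameter (G i)) \<le> c * emeasure lebesgue (H i)"
    and Hs: "\<And>i. i \<in> I \<Longrightarrow> H i \<in> sets lebesgue"
    and Hd: "disjoint_family_on H I"
    and d: "0 \<le> d"
  shows "hausdorff1_pre d T \<le> c * emeasure lebesgue (\<Union>i\<in>I. H i)"
proof -
  define J where "J = to_nat_on I ` I"
  define D where "D n = (if n \<in> J then G (from_nat_into I n) else {})" for n
  define HH where "HH n = (if n \<in> J then H (from_nat_into I n) else {})" for n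
  have inJ: "n \<in> J \<Longrightarrow> from_nat_into I n \<in> I \<and> to_nat_on I (from_nat_into I n) = n" for n
    using I by (auto simp: J_def)
  have cov: "T \<subseteq> (\<Union>n. D n)"
  proof
    fix x assume "x \<in> T"
    then obtain i where i: "i \<in> I" "x \<in> G i" using T by blast
    then have "x \<in> D (to_nat_on I i)" using I by (simp add: D_def J_def)
    then show "x \<in> (\<Union>n. D n)" by blast
  qed
  have "hausdorff1_pre d T \<le> (\<Sum>n. ennreal (diameter (D n)))"
    by (rule pre_le_cover[OF cov]) (use inJ Gb Gd d in \<open>auto simp: D_def\<close>)
  also have "\<dots> \<le> (\<Sum>n. c * emeasure lebesgue (HH n))"
    by (intro suminf_le summableI) (use inJ Gc in \<open>auto simp: D_def HH_def\<close>)
  also have "\<dots> = c * emeasure lebesgue (\<Union>n. HH n)"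
  proof -
    have "disjoint_family HH"
      unfolding disjoint_family_on_def
    proof (intro ballI impI)
      fix m n :: nat assume "m \<noteq> n"
      show "HH m \<inter> HH n = {}"
      proof (cases "m \<in> J \<and> n \<in> J")
        case True
        then have "from_nat_into I m \<noteq> from_nat_into I n" using inJ \<open>m \<noteq> n\<close> by metis
        then show ?thesis using Hd True inJ unfolding disjoint_family_on_def HH_def by auto
      qed (auto simp: HH_def)
    qed
    moreover have "range HH \<subseteq> sets lebesgue" using inJ Hs by (auto simp: HH_def)
    ultimately show ?thesis using suminf_emeasure[of HH lebesgue] by simp
  qed
  also have "\<dots> \<le> c * emeasure lebesgue (\<Union>i\<in>I. H i)"
  proof (intro mult_left_mono emeasure_mono)
    show "(\<Union>n. HH n) \<subseteq> (\<Union>i\<in>I. H i)" using inJ by (auto simp: HH_def split: if_splits)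
    show "(\<Union>i\<in>I. H i) \<in> sets lebesgue" using I Hs by (intro sets.countable_UN'') auto
  qed auto
  finally show ?thesis .
qed

lemma pre_null:
  fixes f :: "real \<Rightarrow> 'a::metric_space"
  assumes ab: "a < b" and N: "N \<subseteq> {a..b}" "negligible N" and C: "0 \<le> C" and dpos: "0 < d"
    and L: "\<And>x. x \<in> N \<Longrightarrow> \<exists>r>0. \<forall>y\<in>{a..b}. \<bar>y - x\<bar> < r \<longrightarrow> dist (f y) (f x) \<le> C * \<bar>y - x\<bar>"
  shows "hausdorff1_pre d (f ` N) = 0"
proof -
  have "hausdorff1_pre d (f ` N) \<le> 0"
  proof (rule ennreal_le_epsilon)
    fix e :: real assume e: "0 < e"
    define e' where "e' = e / (2*C+1)"
    have e': "0 < e'" using e C by (simp add: e'_def)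
    have Ns: "N \<in> sets lebesgue" using N(2) by (rule negligible_imp_sets)
    obtain U where U: "open U" "N \<subseteq> U" "emeasure lebesgue (U - N) < ennreal e'"
      using sets_lebesgue_outer_open[OF Ns e'] by metis
    have Us: "U \<in> sets lebesgue" using U(1) by auto
    have eqU: "(U - N) \<union> N = U" using U(2) by blast
    have "emeasure lebesgue ((U - N) \<union> N) \<le> emeasure lebesgue (U - N) + emeasure lebesgue N"
      by (rule emeasure_subadditive) (use Us Ns in auto)
    then have "emeasure lebesgue U \<le> emeasure lebesgue (U - N) + emeasure lebesgue N"
      by (simp only: eqU)
    also have "emeasure lebesgue N = 0" by (rule iffD1[OF negligible_iff_emeasure0[OF Ns] N(2)])
    finally have UL: "emeasure lebesgue U \<le> ennreal e'" using U(3) by simp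
    have "\<exists>r>0. x \<in> N \<longrightarrow> ball x r \<subseteq> U \<and> (\<forall>y\<in>{a..b}. \<bar>y - x\<bar> < r \<longrightarrow> dist (f y) (f x) \<le> C * \<bar>y - x\<bar>) \<and> 2*C*r \<le> d" for x
    proof (cases "x \<in> N")
      case True
      obtain r1 where r1: "r1 > 0" "\<forall>y\<in>{a..b}. \<bar>y - x\<bar> < r1 \<longrightarrow> dist (f y) (f x) \<le> C * \<bar>y - x\<bar>"
        using L[OF True] by blast
      obtain r2 where r2: "r2 > 0" "ball x r2 \<subseteq> U" using U(1,2) True openE by blast
      define r where "r = min (min r1 r2) (d / (2*C+1))"
      have "r > 0" using r1 r2 dpos C by (simp add: r_def)
      moreover have "ball x r \<subseteq> U" using r2 by (auto simp: r_def)
      moreover have "2*C*r \<le> d"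
      proof -
        have "2*C*r \<le> (2*C+1) * r" using \<open>r > 0\<close> by simp
        also have "\<dots> \<le> (2*C+1) * (d / (2*C+1))" using C by (intro mult_left_mono) (auto simp: r_def)
        also have "\<dots> = d" using C by simp
        finally show ?thesis .
      qed
      ultimately show ?thesis using r1 by (intro exI[of _ r]) (auto simp: r_def)
    qed (auto intro: exI[of _ 1])
    then have "\<exists>R. \<forall>x. 0 < R x \<and> (x \<in> N \<longrightarrow> ball x (R x) \<subseteq> U \<and> (\<forall>y\<in>{a..b}. \<bar>y - x\<bar> < R x \<longrightarrow> dist (f y) (f x) \<le> C * \<bar>y - x\<bar>) \<and> 2*C*R x \<le> d)"
      by (intro choice) blast
    then obtain R where R0: "\<forall>x. 0 < R x \<and> (x \<in> N \<longrightarrow> ball x (R x) \<subseteq> U \<and> (\<forall>y\<in>{a..b}. \<bar>y - x\<bar> < R x \<longrightarrow> dist (f y) (f x) \<le> C * \<bar>y - x\<bar>) \<and> 2*C*R x \<le> d)"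
      by blast
    have R: "\<And>x. R x > 0"
      "\<And>x. x \<in> N \<Longrightarrow> ball x (R x) \<subseteq> U"
      "\<And>x y. x \<in> N \<Longrightarrow> y \<in> {a..b} \<Longrightarrow> \<bar>y - x\<bar> < R x \<Longrightarrow> dist (f y) (f x) \<le> C * \<bar>y - x\<bar>"
      "\<And>x. x \<in> N \<Longrightarrow> 2*C*R x \<le> d"
      using R0 by auto
    have gauge: "gauge (\<lambda>x. ball x (R x))" using R(1) by (auto simp: gauge_def)
    have Ncb: "N \<subseteq> cbox a b" unfolding cbox_interval using N(1) .
    have bne: "box a b \<noteq> {}" unfolding box_real using ab by auto
    obtain \<D> where D: "countable \<D>" "\<Union>\<D> \<subseteq> cbox a b" "\<And>K. K \<in> \<D> \<Longrightarrow> interior K \<noteq> {} \<and> (\<exists>c d. K = cbox c d)"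
      "pairwise (\<lambda>A B. interior A \<inter> interior B = {}) \<D>"
      "\<And>K. K \<in> \<D> \<Longrightarrow> \<exists>x \<in> N \<inter> K. K \<subseteq> ball x (R x)"
      "\<And>u v. cbox u v \<in> \<D> \<Longrightarrow> \<exists>n. \<forall>i \<in> Basis. v \<bullet> i - u \<bullet> i = (b \<bullet> i - a \<bullet> i) / 2^n"
      "N \<subseteq> \<Union>\<D>"
      by (rule covering_lemma[OF Ncb bne gauge]) (rule that; assumption+)
    have props: "bounded (f ` (K \<inter> {a..b})) \<and> diameter (f ` (K \<inter> {a..b})) \<le> d \<and>
       ennreal (diameter (f ` (K \<inter> {a..b}))) \<le> ennreal (2*C) * emeasure lebesgue (interior K)"
      if K: "K \<in> \<D>" for K
    proof -
      obtain u v where uv: "K = cbox u v" using D(3)[OF K] by blast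
      have "interior K \<noteq> {}" using D(3)[OF K] by blast
      then have uvl: "u < v" using uv by simp
      obtain z where z: "z \<in> N" "z \<in> K" "K \<subseteq> ball z (R z)" using D(5)[OF K] by blast
      have b1: "dist p (f z) \<le> C * R z" if pK: "p \<in> f ` (K \<inter> {a..b})" for p
      proof -
        obtain y where y: "y \<in> K" "y \<in> {a..b}" "p = f y" using pK by blast
        have yz: "\<bar>y - z\<bar> < R z" using z(3) y(1) by (auto simp: dist_real_def)
        have "dist (f y) (f z) \<le> C * \<bar>y - z\<bar>" by (rule R(3)[OF z(1) y(2) yz])
        also have "\<dots> \<le> C * R z" using C yz by (intro mult_left_mono) auto
        finally show ?thesis using y(3) by simp
      qed
      have b2: "dist p (f z) \<le> C * (v - u)" if pK: "p \<in> f ` (K \<inter> {a..b})" for p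
      proof -
        obtain y where y: "y \<in> K" "y \<in> {a..b}" "p = f y" using pK by blast
        have yz: "\<bar>y - z\<bar> < R z" using z(3) y(1) by (auto simp: dist_real_def)
        have yz2: "\<bar>y - z\<bar> \<le> v - u" using y(1) z(2) uv by auto
        have "dist (f y) (f z) \<le> C * \<bar>y - z\<bar>" by (rule R(3)[OF z(1) y(2) yz])
        also have "\<dots> \<le> C * (v - u)" using C yz2 by (intro mult_left_mono) auto
        finally show ?thesis using y(3) by simp
      qed
      have "diameter (f ` (K \<inter> {a..b})) \<le> 2 * (C * R z)"
        using diam_bound(2)[OF b1] C R(1)[of z] by simp
      also have "\<dots> \<le> d" using R(4)[OF z(1)] by simp
      finally have dd: "diameter (f ` (K \<inter> {a..b})) \<le> d" .
      have "diameter (f ` (K \<inter> {a..b})) \<le> 2 * (C * (v - u))"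
        using diam_bound(2)[OF b2] C uvl by simp
      then have "ennreal (diameter (f ` (K \<inter> {a..b}))) \<le> ennreal (2 * C * (v - u))"
        by (simp add: ennreal_leI mult.assoc)
      also have "\<dots> = ennreal (2*C) * emeasure lebesgue (interior K)"
        using uv uvl C by (simp add: ennreal_mult)
      finally show ?thesis using dd diam_bound(1)[OF b1] C R(1)[of z] by simp
    qed
    have "hausdorff1_pre d (f ` N) \<le> ennreal (2*C) * emeasure lebesgue (\<Union>K\<in>\<D>. interior K)"
    proof (rule pre_cover[OF D(1)])
      show "f ` N \<subseteq> (\<Union>K\<in>\<D>. f ` (K \<inter> {a..b}))" using D(7) N(1) by blast
      show "disjoint_family_on interior \<D>"
        using D(4) unfolding disjoint_family_on_def pairwise_def by blast
    qed (use props dpos in auto)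
    also have "\<dots> \<le> ennreal (2*C) * emeasure lebesgue U"
    proof (intro mult_left_mono emeasure_mono)
      show "(\<Union>K\<in>\<D>. interior K) \<subseteq> U"
      proof safe
        fix K x assume "K \<in> \<D>" "x \<in> interior K"
        then obtain z where "z \<in> N" "K \<subseteq> ball z (R z)" using D(5) by blast
        then show "x \<in> U" using R(2) \<open>x \<in> interior K\<close> interior_subset by blast
      qed
    qed (use Us in auto)
    also have "\<dots> \<le> ennreal (2*C) * ennreal e'" using UL by (intro mult_left_mono) auto
    also have "\<dots> \<le> ennreal e"
    proof -
      have "2*C*e' \<le> e" using C e by (simp add: e'_def field_simps)
      moreover have "ennreal (2 * C) * ennreal e' = ennreal (2*C*e')"
        using C e' by (simp add: ennreal_mult[symmetric])
      ultimately show ?thesis by (simp add: ennreal_leI)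
    qed
    finally show "hausdorff1_pre d (f ` N) \<le> 0 + ennreal e" by simp
  qed
  then show ?thesis by simp
qed


lemma pre_empty: "0 \<le> d \<Longrightarrow> hausdorff1_pre d {} = 0"
  using pre_le_cover[of "{}" "\<lambda>n. {}" d] by simp

lemma pre_Un:
  assumes "0 \<le> d"
  shows "hausdorff1_pre d (X \<union> Y) \<le> hausdorff1_pre d X + hausdorff1_pre d Y"
proof -
  define Z where "Z n = (if n = 0 then X else if n = 1 then Y else {})" for n :: nat
  have "X \<union> Y = (\<Union>n. Z n)"
  proof
    show "X \<union> Y \<subseteq> (\<Union>n. Z n)"
      using Z_def[of 0] Z_def[of 1] by auto
    show "(\<Union>n. Z n) \<subseteq> X \<union> Y" by (auto simp: Z_def split: if_splits)
  qed
  then have "hausdorff1_pre d (X \<union> Y) \<le> (\<Sum>n. hausdorff1_pre d (Z n))"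
    using pre_countable_subadd[of d Z] by simp
  also have "\<dots> = (\<Sum>n\<in>{0,1}. hausdorff1_pre d (Z n))"
    by (rule suminf_finite) (auto simp: Z_def pre_empty assms)
  also have "\<dots> = hausdorff1_pre d X + hausdorff1_pre d Y" by (simp add: Z_def)
  finally show ?thesis .
qed

lemma hd_lip:
  fixes f :: "real \<Rightarrow> 'a::metric_space"
  assumes ab: "a < b" and A: "A \<subseteq> {a..b}" "A \<in> sets lebesgue" and C: "0 \<le> C"
    and L: "\<And>x. x \<in> A \<Longrightarrow> \<exists>r>0. \<forall>y\<in>{a..b}. \<bar>y - x\<bar> < r \<longrightarrow> dist (f y) (f x) \<le> C * \<bar>y - x\<bar>"
  shows "hausdorff1 (f ` A) \<le> ennreal C * emeasure lebesgue A"
proof -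
  have "hausdorff1_pre d (f ` A) \<le> ennreal C * emeasure lebesgue A" if dpos: "0 < d" for d
  proof (rule ennreal_le_epsilon)
    fix e :: real assume e: "0 < e"
    define e' where "e' = e / (C+1)"
    have e': "0 < e'" using e C by (simp add: e'_def)
    obtain U where U: "open U" "A \<subseteq> U" "emeasure lebesgue (U - A) < ennreal e'"
      using sets_lebesgue_outer_open[OF A(2) e'] by metis
    have Us: "U \<in> sets lebesgue" using U(1) by auto
    have eqU: "(U - A) \<union> A = U" using U(2) by blast
    have "emeasure lebesgue ((U - A) \<union> A) \<le> emeasure lebesgue (U - A) + emeasure lebesgue A"
      by (rule emeasure_subadditive) (use Us A(2) in auto)
    then have "emeasure lebesgue U \<le> emeasure lebesgue (U - A) + emeasure lebesgue A"
      by (simp only: eqU)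
    then have UL: "emeasure lebesgue U \<le> emeasure lebesgue A + ennreal e'"
      using U(3) by (metis add.commute add_right_mono less_imp_le order_trans)
    have "\<exists>r>0. x \<in> A \<longrightarrow> ball x r \<subseteq> U \<and> (\<forall>y\<in>{a..b}. \<bar>y - x\<bar> < r \<longrightarrow> dist (f y) (f x) \<le> C * \<bar>y - x\<bar>) \<and> 2*C*r \<le> d" for x
    proof (cases "x \<in> A")
      case True
      obtain r1 where r1: "r1 > 0" "\<forall>y\<in>{a..b}. \<bar>y - x\<bar> < r1 \<longrightarrow> dist (f y) (f x) \<le> C * \<bar>y - x\<bar>"
        using L[OF True] by blast
      obtain r2 where r2: "r2 > 0" "ball x r2 \<subseteq> U" using U(1,2) True openE by blast
      define r where "r = min (min r1 r2) (d / (2*C+1))"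
      have "r > 0" using r1 r2 dpos C by (simp add: r_def)
      moreover have "ball x r \<subseteq> U" using r2 by (auto simp: r_def)
      moreover have "2*C*r \<le> d"
      proof -
        have "2*C*r \<le> (2*C+1) * r" using \<open>r > 0\<close> by simp
        also have "\<dots> \<le> (2*C+1) * (d / (2*C+1))" using C by (intro mult_left_mono) (auto simp: r_def)
        also have "\<dots> = d" using C by simp
        finally show ?thesis .
      qed
      ultimately show ?thesis using r1 by (intro exI[of _ r]) (auto simp: r_def)
    qed (auto intro: exI[of _ 1])
    then have "\<exists>R. \<forall>x. 0 < R x \<and> (x \<in> A \<longrightarrow> ball x (R x) \<subseteq> U \<and> (\<forall>y\<in>{a..b}. \<bar>y - x\<bar> < R x \<longrightarrow> dist (f y) (f x) \<le> C * \<bar>y - x\<bar>) \<and> 2*C*R x \<le> d)"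
      by (intro choice) blast
    then obtain R where R0: "\<forall>x. 0 < R x \<and> (x \<in> A \<longrightarrow> ball x (R x) \<subseteq> U \<and> (\<forall>y\<in>{a..b}. \<bar>y - x\<bar> < R x \<longrightarrow> dist (f y) (f x) \<le> C * \<bar>y - x\<bar>) \<and> 2*C*R x \<le> d)"
      by blast
    have R: "\<And>x. R x > 0"
      "\<And>x. x \<in> A \<Longrightarrow> ball x (R x) \<subseteq> U"
      "\<And>x y. x \<in> A \<Longrightarrow> y \<in> {a..b} \<Longrightarrow> \<bar>y - x\<bar> < R x \<Longrightarrow> dist (f y) (f x) \<le> C * \<bar>y - x\<bar>"
      "\<And>x. x \<in> A \<Longrightarrow> 2*C*R x \<le> d"
      using R0 by auto
    define K where "K = {(x, r). x \<in> A \<and> 0 < r \<and> r \<le> R x}"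
    have Kcov: "\<exists>i. i \<in> K \<and> x \<in> ball (fst i) (snd i) \<and> snd i < dd" if "x \<in> A" "0 < dd" for x dd
      using that R(1)[of x] by (intro exI[of _ "(x, min (R x) (dd/2))"]) (auto simp: K_def)
    obtain Cc where Cc: "countable Cc" "Cc \<subseteq> K"
      "pairwise (\<lambda>i j. disjnt (ball (fst i) (snd i)) (ball (fst j) (snd j))) Cc"
      "negligible (A - (\<Union>i\<in>Cc. ball (fst i) (snd i)))"
      apply (rule Vitali_covering_theorem_balls[of A K fst snd])
       apply (rule Kcov; assumption)
      apply (rule that; assumption)
      done
    define N where "N = A - (\<Union>i\<in>Cc. ball (fst i) (snd i))"
    have preN: "hausdorff1_pre d (f ` N) = 0"
      by (rule pre_null[OF ab _ _ C dpos]) (use A(1) Cc(4) L in \<open>auto simp: N_def\<close>)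
    define P where "P = (\<Union>i\<in>Cc. f ` (ball (fst i) (snd i) \<inter> {a..b}))"
    have props: "bounded (f ` (ball (fst i) (snd i) \<inter> {a..b})) \<and> diameter (f ` (ball (fst i) (snd i) \<inter> {a..b})) \<le> d \<and>
       ennreal (diameter (f ` (ball (fst i) (snd i) \<inter> {a..b}))) \<le> ennreal C * emeasure lebesgue (ball (fst i) (snd i))"
      if i: "i \<in> Cc" for i
    proof -
      obtain x r where xr: "i = (x, r)" by (cases i)
      have x: "x \<in> A" "0 < r" "r \<le> R x" using Cc(2) i xr by (auto simp: K_def)
      have b1: "dist p (f x) \<le> C * r" if pK: "p \<in> f ` (ball x r \<inter> {a..b})" for p
      proof -
        obtain y where y: "y \<in> ball x r" "y \<in> {a..b}" "p = f y" using pK by blast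
        have yz: "\<bar>y - x\<bar> < r" using y(1) by (auto simp: dist_real_def)
        have "dist (f y) (f x) \<le> C * \<bar>y - x\<bar>" using x(3) yz by (intro R(3)[OF x(1) y(2)]) auto
        also have "\<dots> \<le> C * r" using C yz by (intro mult_left_mono) auto
        finally show ?thesis using y(3) by simp
      qed
      have dm: "diameter (f ` (ball x r \<inter> {a..b})) \<le> 2 * (C * r)"
        using diam_bound(2)[OF b1] C x(2) by simp
      have "2 * (C * r) \<le> 2 * C * R x" using C x(3) by (simp add: mult_left_mono)
      also have "\<dots> \<le> d" using R(4)[OF x(1)] .
      finally have dd: "diameter (f ` (ball x r \<inter> {a..b})) \<le> d" using dm by linarith
      have "ennreal (diameter (f ` (ball x r \<inter> {a..b}))) \<le> ennreal (C * (2 * r))"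
        using dm by (intro ennreal_leI) (simp add: algebra_simps)
      also have "\<dots> = ennreal C * emeasure lebesgue (ball x r)"
        using C x(2) by (simp add: ennreal_mult ball_eq_greaterThanLessThan)
      finally show ?thesis using dd diam_bound(1)[OF b1] C x(2) xr by simp
    qed
    have "hausdorff1_pre d P \<le> ennreal C * emeasure lebesgue (\<Union>i\<in>Cc. ball (fst i) (snd i))"
    proof (rule pre_cover[OF Cc(1)])
      show "P \<subseteq> (\<Union>i\<in>Cc. f ` (ball (fst i) (snd i) \<inter> {a..b}))" by (simp add: P_def)
      show "disjoint_family_on (\<lambda>i. ball (fst i) (snd i)) Cc"
        using Cc(3) unfolding disjoint_family_on_def pairwise_def disjnt_def by blast
    qed (use props dpos in auto)
    also have "\<dots> \<le> ennreal C * emeasure lebesgue U"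
    proof (intro mult_left_mono emeasure_mono)
      show "(\<Union>i\<in>Cc. ball (fst i) (snd i)) \<subseteq> U"
      proof safe
        fix x r y assume "(x, r) \<in> Cc" "y \<in> ball (fst (x, r)) (snd (x, r))"
        then have "x \<in> A" "r \<le> R x" "dist x y < r" using Cc(2) by (auto simp: K_def)
        then have "y \<in> ball x (R x)" by simp
        then show "y \<in> U" using R(2)[OF \<open>x \<in> A\<close>] by blast
      qed
    qed (use Us in auto)
    also have "\<dots> \<le> ennreal C * (emeasure lebesgue A + ennreal e')"
      using UL by (intro mult_left_mono) auto
    also have "\<dots> = ennreal C * emeasure lebesgue A + ennreal (C * e')"
      using C e' by (simp add: distrib_left ennreal_mult[symmetric])
    also have "\<dots> \<le> ennreal C * emeasure lebesgue A + ennreal e"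
    proof -
      have "C * e' \<le> e" using C e by (simp add: e'_def field_simps)
      then show ?thesis by (intro add_left_mono ennreal_leI)
    qed
    finally have preP: "hausdorff1_pre d P \<le> ennreal C * emeasure lebesgue A + ennreal e" .
    have "f ` A \<subseteq> P \<union> f ` N"
    proof
      fix p assume "p \<in> f ` A"
      then obtain x where x: "x \<in> A" "p = f x" by blast
      show "p \<in> P \<union> f ` N"
      proof (cases "x \<in> N")
        case False
        then obtain i where "i \<in> Cc" "x \<in> ball (fst i) (snd i)" using x(1) by (auto simp: N_def)
        then show ?thesis using x A(1) unfolding P_def by blast
      qed (use x in blast)
    qed
    then have "hausdorff1_pre d (f ` A) \<le> hausdorff1_pre d (P \<union> f ` N)" by (rule pre_mono)
    also have "\<dots> \<le> hausdorff1_pre d P + hausdorff1_pre d (f ` N)" using dpos by (intro pre_Un) auto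
    finally show "hausdorff1_pre d (f ` A) \<le> ennreal C * emeasure lebesgue A + ennreal e"
      using preP preN by simp
  qed
  then show ?thesis unfolding hausdorff1_def by (intro SUP_least) auto
qed


lemma hd_countable_subadd:
  "hausdorff1 (\<Union>j. X j) \<le> (\<Sum>j. hausdorff1 (X j))"
  unfolding hausdorff1_def
proof (intro SUP_least)
  fix d :: real assume "d \<in> {0<..}"
  have "hausdorff1_pre d (\<Union>j. X j) \<le> (\<Sum>j. hausdorff1_pre d (X j))" by (rule pre_countable_subadd)
  also have "\<dots> \<le> (\<Sum>j. SUP d\<in>{0<..}. hausdorff1_pre d (X j))"
    by (intro suminf_le summableI SUP_upper \<open>d \<in> {0<..}\<close>)
  finally show "hausdorff1_pre d (\<Union>j. X j) \<le> (\<Sum>j. SUP d\<in>{0<..}. hausdorff1_pre d (X j))" .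
qed

lemma md_props:
  fixes f :: "real \<Rightarrow> 'a::metric_space"
  assumes ab: "a < b" and x: "x \<in> {a..b}" and ex: "md_exists f a b x"
  shows "0 \<le> md f a b x"
    "\<And>e. 0 < e \<Longrightarrow> \<exists>r>0. \<forall>y\<in>{a..b}. \<bar>y - x\<bar> < r \<longrightarrow> dist (f y) (f x) \<le> (md f a b x + e) * \<bar>y - x\<bar>"
proof -
  define S where "S = {t. x + t \<in> {a..b}}"
  obtain L where L: "(md_quot f x \<longlongrightarrow> L) (at 0 within S)"
    using ex unfolding md_exists_def S_def by blast
  have lim: "(0::real) islimpt S"
    unfolding islimpt_approachable
  proof (intro allI impI)
    fix e :: real assume e: "0 < e"
    show "\<exists>t\<in>S. t \<noteq> 0 \<and> dist t 0 < e"
    proof (cases "x < b")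
      case True
      define t where "t = min (e/2) (b - x)"
      have "t \<in> S" "t \<noteq> 0" "dist t 0 < e" using True e x by (auto simp: t_def S_def dist_real_def)
      then show ?thesis by blast
    next
      case False
      define t where "t = - min (e/2) (b - a)"
      have "t \<in> S" "t \<noteq> 0" "dist t 0 < e" using False e x ab by (auto simp: t_def S_def dist_real_def)
      then show ?thesis by blast
    qed
  qed
  then have nt: "\<not> trivial_limit (at 0 within S)" by (simp add: trivial_limit_within)
  have mdL: "md f a b x = L" unfolding md_def S_def[symmetric] using tendsto_Lim[OF nt L] .
  show "0 \<le> md f a b x"
    unfolding mdL
    by (rule tendsto_lowerbound[OF L]) (use nt in \<open>auto simp: md_quot_def\<close>)
  fix e :: real assume e: "0 < e"
  have "\<forall>\<^sub>F t in at 0 within S. dist (md_quot f x t) L < e" using L e by (simp add: tendsto_iff)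
  then obtain r where r: "r > 0" "\<And>t. t \<in> S \<Longrightarrow> t \<noteq> 0 \<Longrightarrow> dist t 0 < r \<Longrightarrow> dist (md_quot f x t) L < e"
    unfolding eventually_at by blast
  show "\<exists>r>0. \<forall>y\<in>{a..b}. \<bar>y - x\<bar> < r \<longrightarrow> dist (f y) (f x) \<le> (md f a b x + e) * \<bar>y - x\<bar>"
  proof (intro exI[of _ r] conjI ballI impI)
    fix y assume y: "y \<in> {a..b}" "\<bar>y - x\<bar> < r"
    show "dist (f y) (f x) \<le> (md f a b x + e) * \<bar>y - x\<bar>"
    proof (cases "y = x")
      case False
      have "dist (md_quot f x (y - x)) L < e" using y False by (intro r(2)) (auto simp: S_def dist_real_def)
      then have "dist (f y) (f x) / \<bar>y - x\<bar> < L + e" by (simp add: md_quot_def dist_real_def)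
      then have "dist (f y) (f x) < (L + e) * \<bar>y - x\<bar>" using False by (simp add: divide_less_eq)
      then show ?thesis by (simp add: mdL)
    qed simp
  qed (use r in auto)
qed


theorem theorem2p4:
  fixes f :: "real \<Rightarrow> 'a::metric_space" and a b :: real and E :: "real set"
  assumes "E \<subseteq> {a..b}"
    and "E \<in> sets lebesgue"
    and "\<forall>x\<in>E. md_exists f a b x"
    and "(\<lambda>x. md f a b x) \<in> borel_measurable (restrict_space lebesgue E)"
  shows "hausdorff1 (f ` E) \<le> (\<integral>\<^sup>+ x \<in> E. ennreal (md f a b x) \<partial>lebesgue)"
proof (cases "a < b")
  case False
  have "x = a" if "x \<in> E" for x using assms(1) False that by fastforce
  then have sub: "f ` E \<subseteq> {f a}" by blast
  have "hausdorff1 (f ` E) \<le> 0"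
    unfolding hausdorff1_def
  proof (intro SUP_least)
    fix d :: real assume "d \<in> {0<..}"
    then show "hausdorff1_pre d (f ` E) \<le> 0"
      using pre_le_cover[of "f ` E" "\<lambda>n. {f a}" d] sub by simp
  qed
  then show ?thesis by simp
next
  case ab: True
  define m where "m x = md f a b x" for x
  have mdp: "0 \<le> m x" "\<And>e. 0 < e \<Longrightarrow> \<exists>r>0. \<forall>y\<in>{a..b}. \<bar>y - x\<bar> < r \<longrightarrow> dist (f y) (f x) \<le> (m x + e) * \<bar>y - x\<bar>"
    if "x \<in> E" for x
    using md_props[OF ab _ assms(3)[rule_format, OF that]] assms(1) that unfolding m_def by auto
  show ?thesis
  proof (rule ennreal_le_epsilon)
    fix e :: real assume e: "0 < e"
    define \<epsilon> where "\<epsilon> = e / (2 * (b - a))"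
    have ep: "0 < \<epsilon>" using e ab by (simp add: \<epsilon>_def)
    define Ej where "Ej j = {x\<in>E. real j * \<epsilon> \<le> m x \<and> m x < (real j + 1) * \<epsilon>}" for j :: nat
    have Ej_sets[measurable]: "Ej j \<in> sets lebesgue" for j
    proof -
      have "(\<lambda>x. md f a b x) -` {real j * \<epsilon> ..< (real j + 1) * \<epsilon>} \<inter> space (restrict_space lebesgue E) \<in> sets (restrict_space lebesgue E)"
        by (rule measurable_sets[OF assms(4)]) simp
      moreover have "(\<lambda>x. md f a b x) -` {real j * \<epsilon> ..< (real j + 1) * \<epsilon>} \<inter> space (restrict_space lebesgue E) = Ej j"
        by (auto simp: Ej_def m_def space_restrict_space)
      ultimately show ?thesis using assms(2) by (simp add: sets_restrict_space_iff)
    qed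
    have disj: "disjoint_family Ej"
      unfolding disjoint_family_on_def
    proof (intro ballI impI)
      fix i j :: nat assume "i \<noteq> j"
      show "Ej i \<inter> Ej j = {}"
      proof (rule ccontr)
        assume "Ej i \<inter> Ej j \<noteq> {}"
        then obtain x where "x \<in> Ej i" "x \<in> Ej j" by blast
        then have "real i * \<epsilon> < (real j + 1) * \<epsilon>" "real j * \<epsilon> < (real i + 1) * \<epsilon>"
          by (auto simp: Ej_def)
        then have "real i < real j + 1" "real j < real i + 1" using ep by (simp_all add: mult_less_cancel_right)
        then show False using \<open>i \<noteq> j\<close> by linarith
      qed
    qed
    have Eun: "E = (\<Union>j. Ej j)"
    proof
      show "(\<Union>j. Ej j) \<subseteq> E" by (auto simp: Ej_def)
      show "E \<subseteq> (\<Union>j. Ej j)"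
      proof
        fix x assume x: "x \<in> E"
        define j where "j = nat \<lfloor>m x / \<epsilon>\<rfloor>"
        have "0 \<le> m x / \<epsilon>" using mdp(1)[OF x] ep by simp
        then have "real j \<le> m x / \<epsilon>" "m x / \<epsilon> < real j + 1" unfolding j_def by linarith+
        then have "real j * \<epsilon> \<le> m x" "m x < (real j + 1) * \<epsilon>" using ep by (simp_all add: field_simps)
        then show "x \<in> (\<Union>j. Ej j)" using x by (auto simp: Ej_def)
      qed
    qed
    have hj: "hausdorff1 (f ` Ej j) \<le> ennreal ((real j + 2) * \<epsilon>) * emeasure lebesgue (Ej j)" for j
    proof (rule hd_lip[OF ab _ Ej_sets])
      show "Ej j \<subseteq> {a..b}" using assms(1) by (auto simp: Ej_def)
      show "0 \<le> (real j + 2) * \<epsilon>" using ep by simp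
      fix x assume x: "x \<in> Ej j"
      then have xE: "x \<in> E" and mx: "m x < (real j + 1) * \<epsilon>" by (auto simp: Ej_def)
      obtain r where r: "r > 0" "\<forall>y\<in>{a..b}. \<bar>y - x\<bar> < r \<longrightarrow> dist (f y) (f x) \<le> (m x + \<epsilon>) * \<bar>y - x\<bar>"
        using mdp(2)[OF xE ep] by blast
      show "\<exists>r>0. \<forall>y\<in>{a..b}. \<bar>y - x\<bar> < r \<longrightarrow> dist (f y) (f x) \<le> (real j + 2) * \<epsilon> * \<bar>y - x\<bar>"
      proof (intro exI[of _ r] conjI ballI impI)
        fix y assume y: "y \<in> {a..b}" "\<bar>y - x\<bar> < r"
        have "dist (f y) (f x) \<le> (m x + \<epsilon>) * \<bar>y - x\<bar>" using r y by blast
        also have "\<dots> \<le> (real j + 2) * \<epsilon> * \<bar>y - x\<bar>"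
          using mx by (intro mult_right_mono) (auto simp: algebra_simps)
        finally show "dist (f y) (f x) \<le> (real j + 2) * \<epsilon> * \<bar>y - x\<bar>" .
      qed (use r in auto)
    qed
    have fE: "f ` E = (\<Union>j. f ` Ej j)"
    proof -
      have "f ` (\<Union>j. Ej j) = (\<Union>j. f ` Ej j)" by blast
      then show ?thesis using Eun by metis
    qed
    have "hausdorff1 (f ` E) = hausdorff1 (\<Union>j. f ` Ej j)" by (simp only: fE)
    also have "\<dots> \<le> (\<Sum>j. hausdorff1 (f ` Ej j))" by (rule hd_countable_subadd)
    also have "\<dots> \<le> (\<Sum>j. ennreal ((real j + 2) * \<epsilon>) * emeasure lebesgue (Ej j))"
      by (intro suminf_le hj summableI)
    also have "\<dots> = (\<Sum>j. ennreal (real j * \<epsilon>) * emeasure lebesgue (Ej j) + ennreal (2 * \<epsilon>) * emeasure lebesgue (Ej j))"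
    proof (rule suminf_cong)
      fix j
      have eq: "(real j + 2) * \<epsilon> = real j * \<epsilon> + 2 * \<epsilon>" by (simp add: algebra_simps)
      have "ennreal ((real j + 2) * \<epsilon>) = ennreal (real j * \<epsilon>) + ennreal (2 * \<epsilon>)"
        unfolding eq using ep by (intro ennreal_plus) auto
      then show "ennreal ((real j + 2) * \<epsilon>) * emeasure lebesgue (Ej j) = ennreal (real j * \<epsilon>) * emeasure lebesgue (Ej j) + ennreal (2 * \<epsilon>) * emeasure lebesgue (Ej j)"
        by (simp only: distrib_right)
    qed
    also have "\<dots> = (\<Sum>j. ennreal (real j * \<epsilon>) * emeasure lebesgue (Ej j)) + (\<Sum>j. ennreal (2 * \<epsilon>) * emeasure lebesgue (Ej j))"
      by (rule suminf_add[symmetric]) auto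
    also have "\<dots> \<le> (\<integral>\<^sup>+ x \<in> E. ennreal (md f a b x) \<partial>lebesgue) + ennreal e"
    proof (rule add_mono)
      have "(\<Sum>j. ennreal (real j * \<epsilon>) * emeasure lebesgue (Ej j)) = (\<Sum>j. \<integral>\<^sup>+ x. ennreal (real j * \<epsilon>) * indicator (Ej j) x \<partial>lebesgue)"
        by (simp add: nn_integral_cmult_indicator)
      also have "\<dots> = (\<integral>\<^sup>+ x. (\<Sum>j. ennreal (real j * \<epsilon>) * indicator (Ej j) x) \<partial>lebesgue)"
        by (rule nn_integral_suminf[symmetric]) measurable
      also have "\<dots> \<le> (\<integral>\<^sup>+ x \<in> E. ennreal (md f a b x) \<partial>lebesgue)"
      proof (rule nn_integral_mono)
        fix x
        have "(\<Sum>j. ennreal (real j * \<epsilon>) * indicator (Ej j) x) \<le> (\<Sum>j. ennreal (m x) * indicator (Ej j) x)"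
        proof (intro suminf_le summableI)
          fix j
          show "ennreal (real j * \<epsilon>) * indicator (Ej j) x \<le> ennreal (m x) * indicator (Ej j) x"
            by (cases "x \<in> Ej j") (auto simp: Ej_def intro!: ennreal_leI)
        qed
        also have "\<dots> = ennreal (m x) * indicator E x"
          using suminf_indicator[OF disj, of x] Eun by simp
        finally show "(\<Sum>j. ennreal (real j * \<epsilon>) * indicator (Ej j) x) \<le> ennreal (md f a b x) * indicator E x"
          by (simp add: m_def)
      qed
      finally show "(\<Sum>j. ennreal (real j * \<epsilon>) * emeasure lebesgue (Ej j)) \<le> (\<integral>\<^sup>+ x \<in> E. ennreal (md f a b x) \<partial>lebesgue)" .
      have rs: "range Ej \<subseteq> sets lebesgue" using Ej_sets by auto
      have SE: "(\<Sum>j. emeasure lebesgue (Ej j)) = emeasure lebesgue (\<Union>j. Ej j)"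
        using rs disj by (rule suminf_emeasure)
      have "(\<Sum>j. ennreal (2 * \<epsilon>) * emeasure lebesgue (Ej j)) = ennreal (2 * \<epsilon>) * (\<Sum>j. emeasure lebesgue (Ej j))"
        by (rule ennreal_suminf_cmult)
      also have "\<dots> = ennreal (2 * \<epsilon>) * emeasure lebesgue E" by (simp only: SE Eun[symmetric])
      also have "\<dots> \<le> ennreal (2 * \<epsilon>) * emeasure lebesgue {a..b}"
        using assms(1) by (intro mult_left_mono emeasure_mono) auto
      also have "\<dots> = ennreal (2 * \<epsilon> * (b - a))"
        using ab ep by (simp add: ennreal_mult)
      also have "2 * \<epsilon> * (b - a) = e" using ab by (simp add: \<epsilon>_def field_simps)
      finally show "(\<Sum>j. ennreal (2 * \<epsilon>) * emeasure lebesgue (Ej j)) \<le> ennreal e" .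
    qed
    finally show "hausdorff1 (f ` E) \<le> (\<integral>\<^sup>+ x \<in> E. ennreal (md f a b x) \<partial>lebesgue) + ennreal e" .
  qed
qed

end
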